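(* Let $G$ be a block graph with diameter $2$. Then $G$ is $\chi_\rho$-critical if and only if $\delta(G) \geq 2$.
   Context: Graphs are finite and simple. A block of $G$ is a maximal connected subgraph without cut vertices; a block graph is a connected graph in which every block is a complete graph. $\delta(G)$ is the minimum degree. A $k$-packing coloring of $G$ is a map $c:V(G)\to\{1,\ldots,k\}$ such that two distinct vertices $u,v$ with $c(u)=c(v)=i$ satisfy $d_G(u,v)>i$ (distance between vertices in different components is infinite); $\chi_\rho(G)$ is the smallest $k$ for which such a coloring exists. $G$ is $\chi_\rho$-critical if $\chi_\rho(H)<\chi_\rho(G)$ for every proper subgraph $H$ of $G$. *)

theory Defs
  imports Main "HOL-Library.Extended_Nat"
begin

definition graph :: "'a set \<Rightarrow> 'a set set \<Rightarrow> bool" where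
  "graph V E \<longleftrightarrow> finite V \<and> (\<forall>e\<in>E. \<exists>u v. e = {u, v} \<and> u \<noteq> v \<and> u \<in> V \<and> v \<in> V)"

definition adj :: "'a set set \<Rightarrow> 'a \<Rightarrow> 'a \<Rightarrow> bool" where
  "adj E u v \<longleftrightarrow> {u, v} \<in> E \<and> u \<noteq> v"

definition reachable :: "'a set \<Rightarrow> 'a set set \<Rightarrow> 'a \<Rightarrow> 'a \<Rightarrow> bool" where
  "reachable V E u v \<longleftrightarrow> u \<in> V \<and> v \<in> V \<and> (adj E)\<^sup>*\<^sup>* u v"

definition connected_graph :: "'a set \<Rightarrow> 'a set set \<Rightarrow> bool" where
  "connected_graph V E \<longleftrightarrow> V \<noteq> {} \<and> (\<forall>u\<in>V. \<forall>v\<in>V. reachable V E u v)"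

definition subgraph :: "'a set \<Rightarrow> 'a set set \<Rightarrow> 'a set \<Rightarrow> 'a set set \<Rightarrow> bool" where
  "subgraph V' E' V E \<longleftrightarrow> graph V' E' \<and> V' \<subseteq> V \<and> E' \<subseteq> E"

definition proper_subgraph :: "'a set \<Rightarrow> 'a set set \<Rightarrow> 'a set \<Rightarrow> 'a set set \<Rightarrow> bool" where
  "proper_subgraph V' E' V E \<longleftrightarrow> subgraph V' E' V E \<and> (V', E') \<noteq> (V, E)"

definition del_vertex_edges :: "'a set set \<Rightarrow> 'a \<Rightarrow> 'a set set" where
  "del_vertex_edges E v = {e \<in> E. v \<notin> e}"

definition cut_vertex :: "'a set \<Rightarrow> 'a set set \<Rightarrow> 'a \<Rightarrow> bool" where
  "cut_vertex V E v \<longleftrightarrow> v \<in> V \<and>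
     (\<exists>u\<in>V - {v}. \<exists>w\<in>V - {v}. \<not> reachable (V - {v}) (del_vertex_edges E v) u w)"

definition conn_no_cut :: "'a set \<Rightarrow> 'a set set \<Rightarrow> bool" where
  "conn_no_cut V E \<longleftrightarrow> connected_graph V E \<and> (\<forall>v\<in>V. \<not> cut_vertex V E v)"

definition is_block :: "'a set \<Rightarrow> 'a set set \<Rightarrow> 'a set \<Rightarrow> 'a set set \<Rightarrow> bool" where
  "is_block B F V E \<longleftrightarrow> subgraph B F V E \<and> conn_no_cut B F \<and>
     (\<forall>B' F'. subgraph B' F' V E \<and> conn_no_cut B' F' \<and> B \<subseteq> B' \<and> F \<subseteq> F'
        \<longrightarrow> B' = B \<and> F' = F)"

definition complete_graph :: "'a set \<Rightarrow> 'a set set \<Rightarrow> bool" where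
  "complete_graph V E \<longleftrightarrow> (\<forall>u\<in>V. \<forall>v\<in>V. u \<noteq> v \<longrightarrow> {u, v} \<in> E)"

definition block_graph :: "'a set \<Rightarrow> 'a set set \<Rightarrow> bool" where
  "block_graph V E \<longleftrightarrow> graph V E \<and> connected_graph V E \<and>
     (\<forall>B F. is_block B F V E \<longrightarrow> complete_graph B F)"

definition gdist :: "'a set \<Rightarrow> 'a set set \<Rightarrow> 'a \<Rightarrow> 'a \<Rightarrow> enat" where
  "gdist V E u v = (if \<exists>n. (adj E ^^ n) u v then enat (LEAST n. (adj E ^^ n) u v) else \<infinity>)"

definition diameter :: "'a set \<Rightarrow> 'a set set \<Rightarrow> enat" where
  "diameter V E = Sup {gdist V E u v | u v. u \<in> V \<and> v \<in> V}"

definition degree :: "'a set set \<Rightarrow> 'a \<Rightarrow> nat" where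
  "degree E v = card {u. {u, v} \<in> E \<and> u \<noteq> v}"

definition min_degree :: "'a set \<Rightarrow> 'a set set \<Rightarrow> nat" where
  "min_degree V E = Min (degree E ` V)"

definition packing_coloring :: "'a set \<Rightarrow> 'a set set \<Rightarrow> nat \<Rightarrow> ('a \<Rightarrow> nat) \<Rightarrow> bool" where
  "packing_coloring V E k c \<longleftrightarrow> (\<forall>v\<in>V. c v \<in> {1..k}) \<and>
     (\<forall>u\<in>V. \<forall>v\<in>V. u \<noteq> v \<and> c u = c v \<longrightarrow> gdist V E u v > enat (c u))"

definition packing_chromatic :: "'a set \<Rightarrow> 'a set set \<Rightarrow> nat" where
  "packing_chromatic V E = (LEAST k. \<exists>c. packing_coloring V E k c)"

definition packing_critical :: "'a set \<Rightarrow> 'a set set \<Rightarrow> bool" where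
  "packing_critical V E \<longleftrightarrow>
     (\<forall>V' E'. proper_subgraph V' E' V E \<longrightarrow> packing_chromatic V' E' < packing_chromatic V E)"

end

theory Submission
  imports Defs "HOL-Library.Product_Order"
begin

lemma adj_sym: "adj E u w \<Longrightarrow> adj E w u"
  unfolding adj_def by (auto simp: insert_commute)

lemma adj_in: "graph V E \<Longrightarrow> adj E u w \<Longrightarrow> u \<in> V \<and> w \<in> V"
  unfolding graph_def adj_def by (fastforce simp: doubleton_eq_iff)

lemma relpowp_2: "(R ^^ 2) u w \<longleftrightarrow> (\<exists>m. R u m \<and> R m w)"
  by (auto simp: numeral_2_eq_2 relpowp_Suc_left)

lemma gdist_le1: "gdist V E u w \<le> enat 1 \<Longrightarrow> u = w \<or> adj E u w"
proof -
  assume a: "gdist V E u w \<le> enat 1"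
  then have ex: "\<exists>n. (adj E ^^ n) u w" unfolding gdist_def by (auto split: if_splits)
  then have "(LEAST n. (adj E ^^ n) u w) \<le> 1" using a unfolding gdist_def by auto
  moreover have "(adj E ^^ (LEAST n. (adj E ^^ n) u w)) u w" using ex by (rule LeastI_ex)
  ultimately show ?thesis
    by (cases "(LEAST n. (adj E ^^ n) u w)") auto
qed

lemma gdist_le2: "gdist V E u w \<le> enat 2 \<Longrightarrow> u = w \<or> adj E u w \<or> (\<exists>m. adj E u m \<and> adj E m w)"
proof -
  assume a: "gdist V E u w \<le> enat 2"
  then have ex: "\<exists>n. (adj E ^^ n) u w" unfolding gdist_def by (auto split: if_splits)
  then have "(LEAST n. (adj E ^^ n) u w) \<le> 2" using a unfolding gdist_def by auto
  moreover have "(adj E ^^ (LEAST n. (adj E ^^ n) u w)) u w" using ex by (rule LeastI_ex)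
  ultimately have "(adj E ^^ 0) u w \<or> (adj E ^^ 1) u w \<or> (adj E ^^ 2) u w"
    by (metis le_SucE numeral_2_eq_2 One_nat_def le_zero_eq)
  then show ?thesis unfolding relpowp_2 by auto
qed

lemma gdist_leI_n: "(adj E ^^ n) u w \<Longrightarrow> gdist V E u w \<le> enat n"
  unfolding gdist_def by (auto intro: Least_le)

lemma gdist_le1I: "u = w \<or> adj E u w \<Longrightarrow> gdist V E u w \<le> enat 1"
proof -
  assume "u = w \<or> adj E u w"
  then show ?thesis
  proof
    assume "u = w" then have "(adj E ^^ 0) u w" by simp
    then have "gdist V E u w \<le> enat 0" by (rule gdist_leI_n)
    then show ?thesis by (simp add: zero_enat_def[symmetric])
  next
    assume "adj E u w" then have "(adj E ^^ 1) u w" by (simp add: OO_def)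
    then show ?thesis by (rule gdist_leI_n)
  qed
qed

lemma gdist_le2I: "u = w \<or> adj E u w \<or> (\<exists>m. adj E u m \<and> adj E m w) \<Longrightarrow> gdist V E u w \<le> enat 2"
proof -
  assume h: "u = w \<or> adj E u w \<or> (\<exists>m. adj E u m \<and> adj E m w)"
  show ?thesis
  proof (cases "u = w \<or> adj E u w")
    case True
    then have "gdist V E u w \<le> enat 1" by (rule gdist_le1I)
    also have "\<dots> \<le> enat 2" by simp
    finally show ?thesis .
  next
    case False
    then have "(adj E ^^ 2) u w" using h unfolding relpowp_2 by auto
    then show ?thesis by (rule gdist_leI_n)
  qed
qed

lemma gdist_mono: "E2 \<subseteq> E1 \<Longrightarrow> gdist V1 E1 u w \<le> gdist V2 E2 u w"
proof -
  assume s: "E2 \<subseteq> E1"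
  have m: "(adj E2 ^^ n) u w \<Longrightarrow> (adj E1 ^^ n) u w" for n
    by (rule relpowp_mono[of "adj E2" "adj E1"]) (use s in \<open>auto simp: adj_def\<close>)
  show ?thesis
  proof (cases "\<exists>n. (adj E2 ^^ n) u w")
    case True
    then have "(adj E2 ^^ (LEAST n. (adj E2 ^^ n) u w)) u w" by (rule LeastI_ex)
    then have "(adj E1 ^^ (LEAST n. (adj E2 ^^ n) u w)) u w" by (rule m)
    then have "gdist V1 E1 u w \<le> enat (LEAST n. (adj E2 ^^ n) u w)" by (rule gdist_leI_n)
    then show ?thesis using True unfolding gdist_def[of V2] by simp
  next
    case False
    then show ?thesis unfolding gdist_def[of V2] by simp
  qed
qed

lemma coloring_mono:
  assumes "packing_coloring V1 E1 k c" "V2 \<subseteq> V1" "E2 \<subseteq> E1"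
  shows "packing_coloring V2 E2 k c"
  using assms gdist_mono[OF assms(3)] unfolding packing_coloring_def
  by (meson less_le_trans subsetD)

lemma UB:
  assumes "finite V" "A \<subseteq> V" "B \<subseteq> V" "A \<inter> B = {}"
   "\<forall>u\<in>A. \<forall>w\<in>A. u \<noteq> w \<longrightarrow> \<not> adj E u w"
   "\<forall>u\<in>B. \<forall>w\<in>B. u \<noteq> w \<longrightarrow> \<not> gdist V E u w \<le> enat 2"
  shows "\<exists>c. packing_coloring V E (2 + card (V - A - B)) c"
proof -
  define R where "R = V - A - B"
  have fR: "finite R" using assms(1) unfolding R_def by simp
  obtain h where h: "bij_betw h R {0..<card R}" using ex_bij_betw_finite_nat[OF fR] by blast
  define c where "c u = (if u \<in> A then 1 else if u \<in> B then 2 else 3 + h u)" for u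
  have "packing_coloring V E (2 + card R) c"
    unfolding packing_coloring_def
  proof (intro conjI ballI impI)
    fix v assume "v \<in> V"
    show "c v \<in> {1..2 + card R}"
    proof (cases "v \<in> A \<or> v \<in> B")
      case True then show ?thesis unfolding c_def by auto
    next
      case False
      then have "v \<in> R" using \<open>v \<in> V\<close> unfolding R_def by auto
      then have "h v < card R" using h unfolding bij_betw_def by auto
      then show ?thesis using False unfolding c_def by auto
    qed
  next
    fix u w assume uw: "u \<in> V" "w \<in> V" "u \<noteq> w \<and> c u = c w"
    show "enat (c u) < gdist V E u w"
    proof (cases "u \<in> A")
      case True
      then have "w \<in> A" using uw unfolding c_def by (auto split: if_splits)
      then have "\<not> (u = w \<or> adj E u w)" using True uw assms(5) by blast
      then have "\<not> gdist V E u w \<le> enat 1" using gdist_le1[of V E u w] by auto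
      moreover have "c u = 1" using True unfolding c_def by simp
      ultimately show ?thesis by (simp add: not_le)
    next
      case nA: False
      show ?thesis
      proof (cases "u \<in> B")
        case True
        then have "w \<in> B" using uw nA unfolding c_def by (auto split: if_splits)
        then have "\<not> gdist V E u w \<le> enat 2" using True uw assms(6) by blast
        moreover have "c u = 2" using True nA unfolding c_def by simp
        ultimately show ?thesis by (simp add: not_le)
      next
        case False
        then have "w \<notin> A \<and> w \<notin> B" using uw nA unfolding c_def by (auto split: if_splits)
        then have "u \<in> R" "w \<in> R" using uw nA False unfolding R_def by auto
        moreover have "h u = h w" using uw nA False \<open>w \<notin> A \<and> w \<notin> B\<close> unfolding c_def by auto
        ultimately have "u = w" using h unfolding bij_betw_def inj_on_def by blast
        then show ?thesis using uw by simp
      qed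
    qed
  qed
  then show ?thesis unfolding R_def by blast
qed

lemma UB1:
  assumes "finite V" "A \<subseteq> V"
   "\<forall>u\<in>A. \<forall>w\<in>A. u \<noteq> w \<longrightarrow> \<not> adj E u w"
  shows "\<exists>c. packing_coloring V E (1 + card (V - A)) c"
proof (cases "V - A = {}")
  case True
  have "packing_coloring V E 1 (\<lambda>_. 1)"
    unfolding packing_coloring_def
  proof (intro conjI ballI impI)
    fix u w assume uw: "u \<in> V" "w \<in> V" "u \<noteq> w \<and> (1::nat) = 1"
    then have "\<not> (u = w \<or> adj E u w)" using True assms(3) by blast
    then have "\<not> gdist V E u w \<le> enat 1" using gdist_le1[of V E u w] by auto
    then show "enat 1 < gdist V E u w" by (simp add: not_le)
  qed auto
  moreover have "1 + card (V - A) = 1" using True by (simp only: card.empty)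
  ultimately show ?thesis by metis
next
  case False
  then obtain b where b: "b \<in> V - A" by blast
  have ex: "\<exists>c. packing_coloring V E (2 + card (V - A - {b})) c"
    by (rule UB) (use assms b in auto)
  have "card (V - A - {b}) = card (V - A) - 1"
    using b by (simp add: card_Diff_singleton)
  moreover have "card (V - A) \<ge> 1" using b assms(1)
    by (metis One_nat_def Suc_leI card_gt_0_iff empty_iff finite_Diff)
  ultimately have "2 + card (V - A - {b}) = 1 + card (V - A)" by simp
  then show ?thesis using ex by metis
qed

lemma chi_le: "packing_coloring V E k c \<Longrightarrow> packing_chromatic V E \<le> k"
  unfolding packing_chromatic_def by (auto intro: Least_le)

lemma chi_ex: "finite V \<Longrightarrow> \<exists>c. packing_coloring V E (packing_chromatic V E) c"
proof -
  assume "finite V"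
  then have "\<exists>k c. packing_coloring V E k c" using UB1[of V "{}" E] by auto
  then have "\<exists>k. Ex (packing_coloring V E k)" by simp
  then show ?thesis unfolding packing_chromatic_def by (rule LeastI_ex)
qed

lemma LB:
  assumes "finite V" "V \<noteq> {}" "packing_coloring V E k c"
    "\<forall>u\<in>V. \<forall>w\<in>V. gdist V E u w \<le> enat 2"
  shows "1 + card (V - {u\<in>V. c u = 1}) \<le> k"
proof -
  let ?R = "V - {u\<in>V. c u = 1}"
  have im: "c ` ?R \<subseteq> {2..k}" using assms(3) unfolding packing_coloring_def by force
  have inj: "inj_on c ?R"
  proof (rule inj_onI)
    fix u w assume u: "u \<in> ?R" and w: "w \<in> ?R" and e: "c u = c w"
    show "u = w"
    proof (rule ccontr)
      assume "u \<noteq> w"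
      then have "enat (c u) < gdist V E u w" using assms(3) u w e unfolding packing_coloring_def by blast
      moreover have "c u \<ge> 2" using im u by auto
      then have "enat 2 \<le> enat (c u)" by simp
      ultimately have "enat 2 < gdist V E u w" using order.strict_trans1 by blast
      moreover have "gdist V E u w \<le> enat 2" using assms(4) u w by blast
      ultimately show False by simp
    qed
  qed
  have "card ?R \<le> card {2..k}" using card_inj_on_le[OF inj im] by simp
  moreover obtain v where "v \<in> V" using assms(2) by blast
  then have "k \<ge> 1" using assms(3) unfolding packing_coloring_def by force
  ultimately show ?thesis by simp
qed

lemma block_clique:
  assumes bg: "block_graph V E" and sg: "subgraph S F V E" and cn: "conn_no_cut S F"
  shows "\<forall>u\<in>S. \<forall>w\<in>S. u \<noteq> w \<longrightarrow> adj E u w"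
proof -
  define P where "P = {p. subgraph (fst p) (snd p) V E \<and> conn_no_cut (fst p) (snd p) \<and> S \<subseteq> fst p \<and> F \<subseteq> snd p}"
  have fV: "finite V" using bg unfolding block_graph_def graph_def by blast
  have "P \<subseteq> Pow V \<times> Pow (Pow V)"
  proof
    fix p assume "p \<in> P"
    then have s: "subgraph (fst p) (snd p) V E" unfolding P_def by blast
    then have "fst p \<subseteq> V" unfolding subgraph_def by blast
    moreover have "snd p \<subseteq> Pow V"
    proof
      fix e assume "e \<in> snd p"
      then obtain x y where "e = {x, y}" "x \<in> fst p" "y \<in> fst p"
        using s unfolding subgraph_def graph_def by blast
      then show "e \<in> Pow V" using \<open>fst p \<subseteq> V\<close> by auto
    qed
    ultimately show "p \<in> Pow V \<times> Pow (Pow V)" by (cases p) auto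
  qed
  then have fP: "finite P" by (rule finite_subset) (use fV in simp)
  have "(S, F) \<in> P" unfolding P_def using sg cn by simp
  from finite_has_maximal2[OF fP this] obtain m where m: "m \<in> P" "(S, F) \<le> m"
    "\<forall>b\<in>P. m \<le> b \<longrightarrow> m = b" by blast
  obtain B Fb where mB: "m = (B, Fb)" by (cases m)
  have blk: "is_block B Fb V E"
    unfolding is_block_def
  proof (intro conjI allI impI)
    show "subgraph B Fb V E" "conn_no_cut B Fb" using m(1) mB unfolding P_def by auto
  next
    fix B' F' assume h: "subgraph B' F' V E \<and> conn_no_cut B' F' \<and> B \<subseteq> B' \<and> Fb \<subseteq> F'"
    then have "(B', F') \<in> P" using m(1,2) mB unfolding P_def by (auto simp: less_eq_prod_def)
    moreover have "m \<le> (B', F')" using h mB by (simp add: less_eq_prod_def)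
    ultimately have "m = (B', F')" using m(3) by blast
    then show "B' = B" "F' = Fb" using mB by simp_all
  qed
  then have "complete_graph B Fb" using bg unfolding block_graph_def by blast
  moreover have "S \<subseteq> B" "Fb \<subseteq> E" using m(1,2) mB unfolding P_def subgraph_def
    by (auto simp: less_eq_prod_def)
  ultimately show ?thesis unfolding complete_graph_def adj_def by blast
qed

lemma path_reach:
  assumes "successively (adj F) xs" "u \<in> set xs" "w \<in> set xs"
  shows "(adj F)\<^sup>*\<^sup>* u w"
  using assms
proof (induction xs arbitrary: u w)
  case Nil then show ?case by simp
next
  case (Cons x xs)
  show ?case
  proof (cases xs)
    case Nil then show ?thesis using Cons.prems by simp
  next
    case (Cons y ys)
    have xy: "adj F x y" and sx: "successively (adj F) xs" using Cons.prems(1) \<open>xs = y # ys\<close> by auto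
    have yx: "adj F y x" using xy by (rule adj_sym)
    have r1: "(adj F)\<^sup>*\<^sup>* x z" if "z \<in> set xs" for z
      using Cons.IH[OF sx, of y z] that \<open>xs = y # ys\<close> xy
      by (meson converse_rtranclp_into_rtranclp list.set_intros(1))
    have r2: "(adj F)\<^sup>*\<^sup>* z x" if "z \<in> set xs" for z
      using Cons.IH[OF sx, of z y] that \<open>xs = y # ys\<close> yx
      by (meson rtranclp.rtrancl_into_rtrancl list.set_intros(1))
    show ?thesis using Cons.prems(2,3) Cons.IH[OF sx] r1 r2
      by (auto intro: rtranclp_trans)
  qed
qed

lemma cnc_paths:
  assumes "S \<noteq> {}" "set p = S" "successively (adj F) p"
    "\<forall>x\<in>S. \<exists>q. set q = S - {x} \<and> successively (adj (del_vertex_edges F x)) q"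
  shows "conn_no_cut S F"
proof -
  have 1: "\<forall>u\<in>S. \<forall>w\<in>S. (adj F)\<^sup>*\<^sup>* u w" using path_reach[OF assms(3)] assms(2) by blast
  have 2: "\<forall>u\<in>S-{x}. \<forall>w\<in>S-{x}. (adj (del_vertex_edges F x))\<^sup>*\<^sup>* u w" if x: "x \<in> S" for x
  proof -
    obtain q where q: "set q = S - {x}" "successively (adj (del_vertex_edges F x)) q" using assms(4) x by blast
    show ?thesis using path_reach[OF q(2)] q(1) by blast
  qed
  show ?thesis
    unfolding conn_no_cut_def connected_graph_def cut_vertex_def reachable_def
    using assms(1) 1 2 by blast
qed

lemma graph_empty: "finite S \<Longrightarrow> graph S {}"
  unfolding graph_def by simp

lemma graph_ins: "x \<in> S \<Longrightarrow> y \<in> S \<Longrightarrow> x \<noteq> y \<Longrightarrow> graph S F \<Longrightarrow> graph S (insert {x, y} F)"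
  unfolding graph_def by blast

lemma C4:
  assumes bg: "block_graph V E" and d: "distinct [a,b,c,d]"
    and e: "adj E a b" "adj E b c" "adj E c d" "adj E d a"
  shows "adj E a c"
proof -
  define S where "S = {a,b,c,d}"
  define F where "F = {{a,b},{b,c},{c,d},{d,a}}"
  have g: "graph V E" using bg unfolding block_graph_def by blast
  have "S \<subseteq> V" using adj_in[OF g] e unfolding S_def by blast
  moreover have "F \<subseteq> E" using e unfolding F_def adj_def by blast
  moreover have "graph S F" unfolding F_def
    by (intro graph_ins graph_empty) (use d in \<open>auto simp: S_def\<close>)
  ultimately have sg: "subgraph S F V E" unfolding subgraph_def by blast
  have cn: "conn_no_cut S F"
  proof (rule cnc_paths[where p="[a,b,c,d]"])
    show "S \<noteq> {}" "set [a,b,c,d] = S" unfolding S_def by auto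
    show "successively (adj F) [a,b,c,d]" using d unfolding F_def adj_def by simp
    have "set [b,c,d] = S - {a} \<and> successively (adj (del_vertex_edges F a)) [b,c,d]"
      using d unfolding S_def F_def adj_def del_vertex_edges_def by auto
    moreover have "set [c,d,a] = S - {b} \<and> successively (adj (del_vertex_edges F b)) [c,d,a]"
      using d unfolding S_def F_def adj_def del_vertex_edges_def by auto
    moreover have "set [d,a,b] = S - {c} \<and> successively (adj (del_vertex_edges F c)) [d,a,b]"
      using d unfolding S_def F_def adj_def del_vertex_edges_def by auto
    moreover have "set [a,b,c] = S - {d} \<and> successively (adj (del_vertex_edges F d)) [a,b,c]"
      using d unfolding S_def F_def adj_def del_vertex_edges_def by auto
    ultimately show "\<forall>x\<in>S. \<exists>q. set q = S - {x} \<and> successively (adj (del_vertex_edges F x)) q"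
      unfolding S_def by blast
  qed
  show ?thesis using block_clique[OF bg sg cn] d unfolding S_def by auto
qed

lemma C5:
  assumes bg: "block_graph V E" and d: "distinct [a,b,c,d,f]"
    and e: "adj E a b" "adj E b c" "adj E c d" "adj E d f" "adj E f a"
  shows "\<forall>x\<in>{a,b,c,d,f}. \<forall>y\<in>{a,b,c,d,f}. x \<noteq> y \<longrightarrow> adj E x y"
proof -
  define S where "S = {a,b,c,d,f}"
  define F where "F = {{a,b},{b,c},{c,d},{d,f},{f,a}}"
  have g: "graph V E" using bg unfolding block_graph_def by blast
  have "S \<subseteq> V" using adj_in[OF g] e unfolding S_def by blast
  moreover have "F \<subseteq> E" using e unfolding F_def adj_def by blast
  moreover have "graph S F" unfolding F_def
    by (intro graph_ins graph_empty) (use d in \<open>auto simp: S_def\<close>)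
  ultimately have sg: "subgraph S F V E" unfolding subgraph_def by blast
  have cn: "conn_no_cut S F"
  proof (rule cnc_paths[where p="[a,b,c,d,f]"])
    show "S \<noteq> {}" "set [a,b,c,d,f] = S" unfolding S_def by auto
    show "successively (adj F) [a,b,c,d,f]" using d unfolding F_def adj_def by simp
    have "set [b,c,d,f] = S - {a} \<and> successively (adj (del_vertex_edges F a)) [b,c,d,f]"
      using d unfolding S_def F_def adj_def del_vertex_edges_def by auto
    moreover have "set [c,d,f,a] = S - {b} \<and> successively (adj (del_vertex_edges F b)) [c,d,f,a]"
      using d unfolding S_def F_def adj_def del_vertex_edges_def by auto
    moreover have "set [d,f,a,b] = S - {c} \<and> successively (adj (del_vertex_edges F c)) [d,f,a,b]"
      using d unfolding S_def F_def adj_def del_vertex_edges_def by auto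
    moreover have "set [f,a,b,c] = S - {d} \<and> successively (adj (del_vertex_edges F d)) [f,a,b,c]"
      using d unfolding S_def F_def adj_def del_vertex_edges_def by auto
    moreover have "set [a,b,c,d] = S - {f} \<and> successively (adj (del_vertex_edges F f)) [a,b,c,d]"
      using d unfolding S_def F_def adj_def del_vertex_edges_def by auto
    ultimately show "\<forall>x\<in>S. \<exists>q. set q = S - {x} \<and> successively (adj (del_vertex_edges F x)) q"
      unfolding S_def by blast
  qed
  show ?thesis using block_clique[OF bg sg cn] unfolding S_def by blast
qed

lemma adj_irr: "\<not> adj E x x"
  unfolding adj_def by simp

lemma C5ad:
  assumes bg: "block_graph V E" and d: "distinct [a,b,c,d,f]"
    and e: "adj E a b" "adj E b c" "adj E c d" "adj E d f" "adj E f a"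
  shows "adj E a d"
proof -
  have "a \<in> {a,b,c,d,f}" "d \<in> {a,b,c,d,f}" "a \<noteq> d" using d by auto
  then show ?thesis using C5[OF assms] by blast
qed

locale bgd =
  fixes V :: "'a set" and E :: "'a set set"
  assumes bg: "block_graph V E" and dm: "diameter V E = 2"
begin

lemma g: "graph V E" using bg unfolding block_graph_def by blast
lemma fV: "finite V" using g unfolding graph_def by blast
lemma inV: "adj E x y \<Longrightarrow> x \<in> V \<and> y \<in> V" using adj_in[OF g] .

lemma dist2: "u \<in> V \<Longrightarrow> w \<in> V \<Longrightarrow> gdist V E u w \<le> enat 2"
proof -
  assume "u \<in> V" "w \<in> V"
  then have "gdist V E u w \<le> diameter V E" unfolding diameter_def by (auto intro: Sup_upper)
  then show ?thesis using dm by (simp add: numeral_eq_enat)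
qed

lemma near: "u \<in> V \<Longrightarrow> w \<in> V \<Longrightarrow> u = w \<or> adj E u w \<or> (\<exists>m. adj E u m \<and> adj E m w)"
  by (rule gdist_le2, rule dist2)

lemma nonadj: "\<exists>u\<in>V. \<exists>w\<in>V. u \<noteq> w \<and> \<not> adj E u w"
proof (rule ccontr)
  assume "\<not> ?thesis"
  then have h: "u = w \<or> adj E u w" if "u \<in> V" "w \<in> V" for u w using that by blast
  have "\<forall>u\<in>V. \<forall>w\<in>V. gdist V E u w \<le> enat 1"
    using gdist_le1I[OF h] by blast
  then have "diameter V E \<le> enat 1" unfolding diameter_def by (auto intro: Sup_least)
  then show False using dm by (simp add: numeral_eq_enat)
qed

lemma universal_aux:
  assumes u: "u \<in> V" "w \<in> V" "u \<noteq> w" "\<not> adj E u w" "adj E u v" "adj E v w"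
  shows "\<forall>y\<in>V. y \<noteq> v \<longrightarrow> adj E v y"
proof (intro ballI impI)
  fix y assume y: "y \<in> V" "y \<noteq> v"
  show "adj E v y"
  proof (rule ccontr)
    assume nvy: "\<not> adj E v y"
    have sym: "\<And>x z. adj E x z \<Longrightarrow> adj E z x" by (rule adj_sym)
    have irr: "\<And>x. \<not> adj E x x" by (rule adj_irr)
    have nyv: "\<not> adj E y v" using nvy sym by blast
    have vV: "v \<in> V" using inV u(5) by blast
    have yu: "y \<noteq> u" using u(5) nvy sym by blast
    have yw: "y \<noteq> w" using u(6) nvy by blast
    have uv: "u \<noteq> v" "w \<noteq> v" using u(5,6) irr by blast+
    have vu: "adj E v u" "adj E w v" using u(5,6) sym by blast+
    show False
    proof (cases "adj E y u")
      case True
      have uy: "adj E u y" using True sym by blast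
      from near[OF y(1) u(2)] yw show False
      proof (elim disjE exE conjE)
        assume yw': "adj E y w"
        have "distinct [u,y,w,v]" using u(3) uv yu yw y(2) by auto
        from C4[OF bg this uy yw' vu(2) vu(1)] show False using u(4) by blast
      next
        fix z assume z: "adj E y z" "adj E z w"
        have "z \<noteq> u" using z u(4) by blast
        moreover have "z \<noteq> v" using z nvy sym by blast
        moreover have "z \<noteq> y" "z \<noteq> w" using z irr by blast+
        ultimately have "distinct [u,y,z,w,v]" using u(3) uv yu yw y(2) by auto
        from C5ad[OF bg this uy z vu(2) vu(1)] show False using u(4) by blast
      qed simp
    next
      case nyu: False
      show False
      proof (cases "adj E y w")
        case True
        have wy: "adj E w y" using True sym by blast
        from near[OF y(1) u(1)] yu show False
        proof (elim disjE exE conjE)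
          assume "adj E y u" then show False using nyu by blast
        next
          fix z assume z: "adj E y z" "adj E z u"
          have "z \<noteq> w" using z u(4) sym by blast
          moreover have "z \<noteq> v" using z nvy sym by blast
          moreover have "z \<noteq> y" "z \<noteq> u" using z irr by blast+
          ultimately have "distinct [w,y,z,u,v]" using u(3) uv yu yw y(2) by auto
          from C5ad[OF bg this wy z u(5) u(6)] have "adj E u w" by (rule adj_sym)
          then show False using u(4) by blast
        qed simp
      next
        case nyw: False
        have n1: "y = v \<or> adj E y v \<or> (\<exists>m. adj E y m \<and> adj E m v)" by (rule near[OF y(1) vV])
        obtain m where m: "adj E y m" "adj E m v" using n1 y(2) nyv by blast
        have n2: "y = w \<or> adj E y w \<or> (\<exists>m. adj E y m \<and> adj E m w)" by (rule near[OF y(1) u(2)])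
        obtain z where z: "adj E y z" "adj E z w" using n2 yw nyw by blast
        have mu: "m \<noteq> u" using m nyu by blast
        have mw: "m \<noteq> w" using m nyw by blast
        have my: "m \<noteq> y" "m \<noteq> v" using m irr by blast+
        have zv: "z \<noteq> v" using z nyv by blast
        have zz: "z \<noteq> y" "z \<noteq> w" using z irr by blast+
        have vm: "adj E v m" "adj E m y" using m sym by blast+
        show False
        proof (cases "z = m")
          case zmF: False
          have dd: "distinct [y,z,w,v,m]" using zmF yw y(2) my mw zv zz uv by auto
          have "adj E y v" by (rule C5ad[OF bg dd z(1) z(2) vu(2) vm(1) vm(2)])
          then show False using nyv by blast
        next
          case zm: True
          have n3: "y = u \<or> adj E y u \<or> (\<exists>m. adj E y m \<and> adj E m u)" by (rule near[OF y(1) u(1)])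
          obtain z' where z': "adj E y z'" "adj E z' u" using n3 yu nyu by blast
          have z'v: "z' \<noteq> v" using z' nyv by blast
          have zz': "z' \<noteq> y" "z' \<noteq> u" using z' irr by blast+
          show False
          proof (cases "z' = m")
            case False
            then have "distinct [y,z',u,v,m]" using yu y(2) my mu z'v zz' uv by auto
            from C5ad[OF bg this z'(1) z'(2) u(5) vm(1) vm(2)] show False using nyv by blast
          next
            case True
            have um: "adj E u m" using z'(2) True sym by blast
            have mw': "adj E m w" using z(2) zm by simp
            have "distinct [u,m,w,v]" using u(3) uv mu mw my by auto
            from C4[OF bg this um mw' vu(2) vu(1)] show False using u(4) by blast
          qed
        qed
      qed
    qed
  qed
qed

lemma universal: "\<exists>v\<in>V. \<forall>y\<in>V. y \<noteq> v \<longrightarrow> adj E v y"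
proof -
  obtain u w where u: "u \<in> V" "w \<in> V" "u \<noteq> w" "\<not> adj E u w" using nonadj by blast
  then obtain v where "adj E u v" "adj E v w" using near by blast
  then show ?thesis using universal_aux[OF u] inV by blast
qed

end

lemma card2: "finite V \<Longrightarrow> p \<in> V \<Longrightarrow> q \<in> V \<Longrightarrow> p \<noteq> q \<Longrightarrow> card (V - {p, q}) = card V - 2"
  by (subst card_Diff_subset) auto

lemma adj_del: "adj (del_vertex_edges E x) a b \<longleftrightarrow> adj E a b \<and> a \<noteq> x \<and> b \<noteq> x"
  unfolding adj_def del_vertex_edges_def by auto

lemma adj_minus: "adj (E - {e}) a b \<longleftrightarrow> adj E a b \<and> {a, b} \<noteq> e"
  unfolding adj_def by auto

context bgd
begin

lemma trans_cls:
  assumes "v \<in> V" "\<forall>y\<in>V. y \<noteq> v \<longrightarrow> adj E v y" "adj E x y" "adj E y z" "x \<noteq> z"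
    "x \<noteq> v" "y \<noteq> v" "z \<noteq> v"
  shows "adj E x z"
proof -
  have xz: "x \<in> V" "z \<in> V" using inV assms(3,4) by blast+
  have "x \<noteq> y" "y \<noteq> z" using assms(3,4) adj_irr by metis+
  then have d: "distinct [x,y,z,v]" using assms(5,6,7,8) by auto
  have "adj E v z" using assms(2,8) xz by blast
  then have zv: "adj E z v" by (rule adj_sym)
  have vx: "adj E v x" using assms(2,6) xz by blast
  show ?thesis by (rule C4[OF bg d assms(3,4) zv vx])
qed

lemma nbr_unique:
  assumes univ: "v \<in> V" "\<forall>y\<in>V. y \<noteq> v \<longrightarrow> adj E v y"
    and C: "C \<subseteq> V" "\<forall>a\<in>C. \<forall>b\<in>C. a \<noteq> b \<longrightarrow> \<not> adj E a b" "v \<notin> C"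
    and a: "a \<noteq> v"
  shows "card {y\<in>C. y = a \<or> adj E a y} \<le> 1"
proof -
  have fC: "finite C" using finite_subset[OF C(1) fV] .
  have uq: "y = z" if y: "y \<in> C" "y = a \<or> adj E a y" and z: "z \<in> C" "z = a \<or> adj E a z" for y z
  proof (rule ccontr)
    assume yz: "y \<noteq> z"
    have yv: "y \<noteq> v" "z \<noteq> v" using y z C(3) by blast+
    have "adj E y z"
    proof (cases "y = a")
      case True then show ?thesis using z yz by simp
    next
      case False
      then have ay: "adj E y a" using y adj_sym[of E a y] by blast
      show ?thesis
      proof (cases "z = a")
        case True then show ?thesis using ay by simp
      next
        case False
        then have "adj E a z" using z by blast
        then show ?thesis using trans_cls[OF univ ay _ yz] yv a by simp
      qed
    qed
    then show False using C(2) y z yz by blast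
  qed
  have fD: "finite {y\<in>C. y = a \<or> adj E a y}" using fC by simp
  show ?thesis unfolding One_nat_def card_le_Suc0_iff_eq[OF fD] using uq by blast
qed

end

context bgd
begin

lemma del_vertex_case:
  assumes univ: "v \<in> V" "\<forall>y\<in>V. y \<noteq> v \<longrightarrow> adj E v y"
    and deg: "\<forall>y\<in>V. y \<noteq> v \<longrightarrow> (\<exists>y'. adj E y y' \<and> y' \<noteq> v)"
    and C: "C \<subseteq> V" "\<forall>a\<in>C. \<forall>b\<in>C. a \<noteq> b \<longrightarrow> \<not> adj E a b"
    and x: "x \<in> V"
  shows "\<exists>k c. packing_coloring (V - {x}) (del_vertex_edges E x) k c \<and> k + card C \<le> card V"
proof -
  have fC: "finite C" using finite_subset[OF C(1) fV] .
  obtain u0 w0 where u0: "u0 \<in> V" "w0 \<in> V" "u0 \<noteq> w0" "\<not> adj E u0 w0" using nonadj by blast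
  have u0v: "u0 \<noteq> v" using u0 univ by auto
  have "\<exists>A. A \<subseteq> V - {x} \<and> (\<forall>a\<in>A. \<forall>b\<in>A. a \<noteq> b \<longrightarrow> \<not> adj E a b) \<and> card C \<le> card A"
  proof (cases "x \<in> C")
    case False
    then show ?thesis using C by blast
  next
    case xC: True
    show ?thesis
    proof (cases "x = v")
      case True
      have "C \<subseteq> {v}"
      proof
        fix a assume a: "a \<in> C"
        show "a \<in> {v}"
        proof (rule ccontr)
          assume na: "a \<notin> {v}"
          then have "adj E v a" using univ a C(1) by blast
          then show False using C(2) a xC True na by auto
        qed
      qed
      then have "card C \<le> card {v}" by (intro card_mono) simp_all
      then have "card C \<le> card {u0}" by simp
      moreover have "{u0} \<subseteq> V - {x}" using u0 u0v True by blast
      ultimately show ?thesis by (intro exI[of _ "{u0}"]) simp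
    next
      case False
      obtain x' where x': "adj E x x'" "x' \<noteq> v" using deg x False by blast
      have x'V: "x' \<in> V" using inV x'(1) by blast
      have xx': "x' \<noteq> x" using x'(1) adj_irr by metis
      have x'C: "x' \<notin> C"
      proof
        assume "x' \<in> C"
        then have "\<not> adj E x x'" using C(2) xC xx' by simp
        then show False using x'(1) by simp
      qed
      have vC: "v \<notin> C"
      proof
        assume "v \<in> C"
        moreover have "adj E v x" using univ x False by blast
        ultimately show False using C(2) xC False by metis
      qed
      define A where "A = insert x' (C - {x})"
      have "A \<subseteq> V - {x}" unfolding A_def using C(1) x'V xx' by blast
      moreover have "card A = card C"
      proof -
        have "card C > 0" using fC xC card_gt_0_iff by blast
        then show ?thesis unfolding A_def using x'C fC xC by simp
      qed
      moreover have "\<forall>a\<in>A. \<forall>b\<in>A. a \<noteq> b \<longrightarrow> \<not> adj E a b"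
      proof -
        have "\<not> adj E a x'" if a: "a \<in> C - {x}" for a
        proof
          assume ax': "adj E a x'"
          have x'x: "adj E x' x" using x'(1) by (rule adj_sym)
          have "a \<noteq> v" using a vC by blast
          then have "adj E a x" using trans_cls[OF univ ax' x'x] a x'(2) False by blast
          then show False using C(2) a xC by blast
        qed
        then show ?thesis unfolding A_def using C(2) adj_sym[of E x'] by blast
      qed
      ultimately show ?thesis by (intro exI[of _ A]) simp
    qed
  qed
  then obtain A where A: "A \<subseteq> V - {x}" "\<forall>a\<in>A. \<forall>b\<in>A. a \<noteq> b \<longrightarrow> \<not> adj E a b" "card C \<le> card A"
    by blast
  have A': "\<forall>a\<in>A. \<forall>b\<in>A. a \<noteq> b \<longrightarrow> \<not> adj (del_vertex_edges E x) a b"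
    using A(2) unfolding adj_del by blast
  obtain c where c: "packing_coloring (V - {x}) (del_vertex_edges E x) (1 + card (V - {x} - A)) c"
    using UB1[OF _ A(1) A'] fV by blast
  have "card (V - {x} - A) = card (V - {x}) - card A"
    by (rule card_Diff_subset) (use A(1) fV finite_subset in auto)
  moreover have "card (V - {x}) = card V - 1" using x by simp
  moreover have "card A \<le> card (V - {x})" using A(1) fV by (simp add: card_mono)
  moreover have "card V \<ge> 1" using x fV by (metis One_nat_def Suc_leI card_gt_0_iff empty_iff)
  ultimately have "1 + card (V - {x} - A) + card C \<le> card V" using A(3) by linarith
  then show ?thesis using c by blast
qed

end

context bgd
begin

lemma del_edge_center:
  assumes univ: "v \<in> V" "\<forall>y\<in>V. y \<noteq> v \<longrightarrow> adj E v y"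
    and deg: "\<forall>y\<in>V. y \<noteq> v \<longrightarrow> (\<exists>y'. adj E y y' \<and> y' \<noteq> v)"
    and C: "C \<subseteq> V" "\<forall>a\<in>C. \<forall>b\<in>C. a \<noteq> b \<longrightarrow> \<not> adj E a b" and vC: "v \<notin> C"
    and a0: "a0 \<in> V" "a0 \<noteq> v" and w: "w \<in> V" "w \<noteq> v" "w \<noteq> a0" "\<not> adj E a0 w"
  shows "\<exists>k c. packing_coloring V (E - {{v, a0}}) k c \<and> k + card C \<le> card V"
proof -
  define E1 where "E1 = E - {{v, a0}}"
  have fC: "finite C" using finite_subset[OF C(1) fV] .
  have nwa0: "\<not> adj E w a0" using w(4) adj_sym[of E w a0] by blast
  obtain a' where a': "adj E a0 a'" "a' \<noteq> v" using deg a0 by blast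
  obtain w' where w': "adj E w w'" "w' \<noteq> v" using deg w by blast
  have a'V: "a' \<in> V" and w'V: "w' \<in> V" using inV a'(1) w'(1) by blast+
  have a'a0: "a' \<noteq> a0" using a'(1) adj_irr by metis
  have w'w: "w' \<noteq> w" using w'(1) adj_irr by metis
  have a'w: "a' \<noteq> w" using a'(1) w(4) by metis
  have a0w': "a0 \<noteq> w'" using w'(1) nwa0 by metis
  have ww'_s: "adj E w' w" using w'(1) by (rule adj_sym)
  have a'w': "a' \<noteq> w'"
  proof
    assume eq: "a' = w'"
    have "adj E a' w" using ww'_s eq by simp
    then have "adj E a0 w" using trans_cls[OF univ a'(1) _ w(3)[symmetric]] a0(2) a'(2) w(2) by blast
    then show False using w(4) by blast
  qed
  have na'w': "\<not> adj E a' w'"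
  proof
    assume h: "adj E a' w'"
    have "adj E a0 w'" using trans_cls[OF univ a'(1) h a0w' a0(2) a'(2) w'(2)] .
    then have "adj E a0 w" using trans_cls[OF univ _ ww'_s w(3)[symmetric] a0(2) w'(2) w(2)] by blast
    then show False using w(4) by blast
  qed
  define Da where "Da = {y\<in>C. y = a0 \<or> adj E a0 y}"
  define Dw where "Dw = {y\<in>C. y = w \<or> adj E w y}"
  have cDa: "card Da \<le> 1" unfolding Da_def by (rule nbr_unique[OF univ C vC a0(2)])
  have cDw: "card Dw \<le> 1" unfolding Dw_def by (rule nbr_unique[OF univ C vC w(2)])
  define R where "R = C - Da - Dw"
  have fR: "finite R" unfolding R_def using fC by simp
  have a'R: "a' \<notin> R" unfolding R_def Da_def using a'(1) by blast
  have w'R: "w' \<notin> R" unfolding R_def Dw_def using w'(1) by blast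
  define A where "A = insert a' (insert w' R)"
  define B where "B = {a0, w}"
  have cA: "card A = card R + 2" unfolding A_def using a'R w'R a'w' fR by simp
  have CRD: "C \<subseteq> R \<union> (Da \<union> Dw)" unfolding R_def Da_def Dw_def by blast
  have fRD: "finite (R \<union> (Da \<union> Dw))" using fC unfolding R_def Da_def Dw_def by simp
  have "card C \<le> card (R \<union> (Da \<union> Dw))" by (rule card_mono[OF fRD CRD])
  also have "\<dots> \<le> card R + (card Da + card Dw)"
    by (metis card_Un_le add_le_mono le_refl order_trans)
  finally have cCA: "card C \<le> card A" using cA cDa cDw by linarith
  have AV: "A \<subseteq> V" unfolding A_def R_def using a'V w'V C(1) by blast
  have BV: "B \<subseteq> V" unfolding B_def using a0 w by blast
  have AB: "A \<inter> B = {}"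
  proof -
    have "a0 \<notin> R" "w \<notin> R" unfolding R_def Da_def Dw_def by blast+
    then show ?thesis unfolding A_def B_def using a'a0 w'w a'w a0w' by blast
  qed
  have indA: "\<forall>p\<in>A. \<forall>q\<in>A. p \<noteq> q \<longrightarrow> \<not> adj E p q"
  proof -
    have za': "\<not> adj E z a'" if z: "z \<in> R" for z
    proof
      assume h: "adj E z a'"
      have zv: "z \<noteq> v" using z vC unfolding R_def by blast
      have za0: "z \<noteq> a0" using z unfolding R_def Da_def by blast
      have a'a0s: "adj E a' a0" using a'(1) by (rule adj_sym)
      have "adj E z a0" using trans_cls[OF univ h a'a0s za0 zv a'(2) a0(2)] .
      then have "adj E a0 z" by (rule adj_sym)
      then show False using z unfolding R_def Da_def by blast
    qed
    have zw': "\<not> adj E z w'" if z: "z \<in> R" for z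
    proof
      assume h: "adj E z w'"
      have zv: "z \<noteq> v" using z vC unfolding R_def by blast
      have zw: "z \<noteq> w" using z unfolding R_def Dw_def by blast
      have "adj E z w" using trans_cls[OF univ h ww'_s zw zv w'(2) w(2)] .
      then have "adj E w z" by (rule adj_sym)
      then show False using z unfolding R_def Dw_def by blast
    qed
    have RR: "\<forall>p\<in>R. \<forall>q\<in>R. p \<noteq> q \<longrightarrow> \<not> adj E p q" using C(2) unfolding R_def by blast
    show ?thesis unfolding A_def using za' zw' RR na'w' adj_sym[of E a'] adj_sym[of E w'] adj_sym[of E _ a'] adj_sym[of E _ w']
      by blast
  qed
  have adjE1: "adj E1 p q \<Longrightarrow> adj E p q" for p q unfolding E1_def adj_minus by blast
  have indA1: "\<forall>p\<in>A. \<forall>q\<in>A. p \<noteq> q \<longrightarrow> \<not> adj E1 p q" using indA adjE1 by blast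
  have nomid: "\<not> adj E1 a0 m \<or> \<not> adj E1 m w" for m
  proof (rule ccontr)
    assume "\<not> ?thesis"
    then have h: "adj E1 a0 m" "adj E1 m w" by auto
    have mv: "m \<noteq> v" using h(1) unfolding E1_def adj_minus by (auto simp: insert_commute)
    have "adj E a0 w" using trans_cls[OF univ adjE1[OF h(1)] adjE1[OF h(2)] w(3)[symmetric] a0(2) mv w(2)] .
    then show False using w(4) by blast
  qed
  have nomid2: "\<not> adj E1 w m \<or> \<not> adj E1 m a0" for m
  proof (rule ccontr)
    assume "\<not> ?thesis"
    then have h: "adj E1 w m" "adj E1 m a0" by auto
    have mv: "m \<noteq> v" using h(2) unfolding E1_def adj_minus by (auto simp: insert_commute)
    have "adj E w a0" using trans_cls[OF univ adjE1[OF h(1)] adjE1[OF h(2)] w(3) w(2) mv a0(2)] .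
    then show False using nwa0 by blast
  qed
  have far1: "\<not> gdist V E1 a0 w \<le> enat 2"
  proof
    assume "gdist V E1 a0 w \<le> enat 2"
    from gdist_le2[OF this] show False using w(3) adjE1 w(4) nomid by metis
  qed
  have far2: "\<not> gdist V E1 w a0 \<le> enat 2"
  proof
    assume "gdist V E1 w a0 \<le> enat 2"
    from gdist_le2[OF this] show False using w(3) adjE1 nwa0 nomid2 by metis
  qed
  have farB: "\<forall>p\<in>B. \<forall>q\<in>B. p \<noteq> q \<longrightarrow> \<not> gdist V E1 p q \<le> enat 2"
    unfolding B_def using far1 far2 by blast
  obtain c where c: "packing_coloring V E1 (2 + card (V - A - B)) c"
    using UB[OF fV AV BV AB indA1 farB] by blast
  have cB: "card B = 2" unfolding B_def using w(3) by simp
  have "card (A \<union> B) = card A + 2" using AB cB card_Un_disjoint fV AV BV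
    by (metis finite_subset)
  moreover have "card (V - A - B) = card V - card (A \<union> B)"
  proof -
    have eq: "V - A - B = V - (A \<union> B)" by blast
    show ?thesis unfolding eq
      using AV BV fV by (intro card_Diff_subset) (auto intro: finite_subset)
  qed
  moreover have "card (A \<union> B) \<le> card V" using AV BV fV by (intro card_mono) auto
  ultimately have "2 + card (V - A - B) + card C \<le> card V" using cCA by linarith
  then show ?thesis using c unfolding E1_def by blast
qed

end

context bgd
begin

lemma del_edge_case:
  assumes univ: "v \<in> V" "\<forall>y\<in>V. y \<noteq> v \<longrightarrow> adj E v y"
    and deg: "\<forall>y\<in>V. y \<noteq> v \<longrightarrow> (\<exists>y'. adj E y y' \<and> y' \<noteq> v)"
    and C: "C \<subseteq> V" "\<forall>a\<in>C. \<forall>b\<in>C. a \<noteq> b \<longrightarrow> \<not> adj E a b"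
    and e: "e \<in> E"
  shows "\<exists>k c. packing_coloring V (E - {e}) k c \<and> k + card C \<le> card V"
proof -
  have fC: "finite C" using finite_subset[OF C(1) fV] .
  obtain a b where ab: "e = {a, b}" "a \<noteq> b" "a \<in> V" "b \<in> V" using g e unfolding graph_def by blast
  have adjab: "adj E a b" using ab e unfolding adj_def by simp
  obtain u0 w0 where u0: "u0 \<in> V" "w0 \<in> V" "u0 \<noteq> w0" "\<not> adj E u0 w0" using nonadj by blast
  have u0v: "u0 \<noteq> v" using u0 univ by auto
  have w0v: "w0 \<noteq> v" using u0 univ adj_sym[of E v u0] by auto
  show ?thesis
  proof (cases "v \<in> C")
    case True
    have "C \<subseteq> {v}"
    proof
      fix a assume a: "a \<in> C"
      show "a \<in> {v}"
      proof (rule ccontr)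
        assume na: "a \<notin> {v}"
        then have "adj E v a" using univ a C(1) by blast
        then show False using C(2) a True na by auto
      qed
    qed
    then have cC: "card C \<le> 1" using card_mono[of "{v}" C] by simp
    have ind: "\<forall>p\<in>{u0, w0}. \<forall>q\<in>{u0, w0}. p \<noteq> q \<longrightarrow> \<not> adj (E - {e}) p q"
      using u0(4) adj_sym[of E w0 u0] unfolding adj_minus by blast
    obtain c where c: "packing_coloring V (E - {e}) (1 + card (V - {u0, w0})) c"
      using UB1[OF fV _ ind] u0 by blast
    have "card (V - {u0, w0}) = card V - 2" by (rule card2[OF fV u0(1,2,3)])
    moreover have "card {u0, w0} \<le> card V" using u0 fV by (intro card_mono) auto
    ultimately have "1 + card (V - {u0, w0}) + card C \<le> card V" using cC u0(3) by simp
    then show ?thesis using c by blast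
  next
    case vC: False
    show ?thesis
    proof (cases "a = v \<or> b = v")
      case False
      define D where "D = {y\<in>C. y = a \<or> adj E a y}"
      have cD: "card D \<le> 1" unfolding D_def by (rule nbr_unique[OF univ C vC]) (use False in blast)
      define R where "R = C - D"
      have fR: "finite R" unfolding R_def using fC by simp
      have aR: "a \<notin> R" "b \<notin> R" unfolding R_def D_def using adjab by blast+
      define A where "A = insert a (insert b R)"
      have cA: "card A = card R + 2" unfolding A_def using aR ab(2) fR by simp
      have "card C \<le> card (R \<union> D)" by (rule card_mono) (use fC in \<open>auto simp: R_def D_def\<close>)
      also have "\<dots> \<le> card R + card D" by (rule card_Un_le)
      finally have cCA: "card C + 1 \<le> card A" using cA cD by linarith
      have AV: "A \<subseteq> V" unfolding A_def R_def using ab C(1) by blast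
      have indA: "\<forall>p\<in>A. \<forall>q\<in>A. p \<noteq> q \<longrightarrow> \<not> adj (E - {e}) p q"
      proof -
        have za: "\<not> adj E z a" if z: "z \<in> R" for z
        proof
          assume "adj E z a"
          then have "adj E a z" by (rule adj_sym)
          then show False using z unfolding R_def D_def by blast
        qed
        have zb: "\<not> adj E z b" if z: "z \<in> R" for z
        proof
          assume h: "adj E z b"
          have zv: "z \<noteq> v" using z vC unfolding R_def by blast
          have zaa: "z \<noteq> a" using z unfolding R_def D_def by blast
          have ba: "adj E b a" using adjab by (rule adj_sym)
          have "adj E z a" using trans_cls[OF univ h ba zaa zv] False by blast
          then show False using za z by blast
        qed
        have ab1: "\<not> adj (E - {e}) a b" "\<not> adj (E - {e}) b a"
          unfolding adj_minus ab(1) by (auto simp: insert_commute)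
        have RR: "\<forall>p\<in>R. \<forall>q\<in>R. p \<noteq> q \<longrightarrow> \<not> adj E p q" using C(2) unfolding R_def by blast
        have sy: "adj E p q \<and> adj E q p" if "adj (E - {e}) p q" for p q
          using that adj_sym[of E p q] unfolding adj_minus by blast
        show ?thesis unfolding A_def using za zb RR ab1 sy by blast
      qed
      obtain c where c: "packing_coloring V (E - {e}) (1 + card (V - A)) c"
        using UB1[OF fV AV indA] by blast
      have "card (V - A) = card V - card A" using AV fV by (intro card_Diff_subset) (auto intro: finite_subset)
      moreover have "card A \<le> card V" using AV fV by (intro card_mono) auto
      ultimately have "1 + card (V - A) + card C \<le> card V" using cCA by linarith
      then show ?thesis using c by blast
    next
      case True
      define a0 where "a0 = (if a = v then b else a)"
      have ea0: "e = {v, a0}" unfolding a0_def using True ab(1) by (auto simp: insert_commute)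
      have a0: "a0 \<in> V" "a0 \<noteq> v" unfolding a0_def using True ab by auto
      have "\<exists>w. w \<in> V \<and> w \<noteq> v \<and> w \<noteq> a0 \<and> \<not> adj E a0 w"
      proof (rule ccontr)
        assume nw: "\<not> ?thesis"
        have n1: "u0 = a0 \<or> adj E a0 u0" using nw u0(1) u0v by blast
        have n2: "w0 = a0 \<or> adj E a0 w0" using nw u0(2) w0v by blast
        have "adj E u0 w0"
        proof (cases "u0 = a0")
          case True then show ?thesis using n2 u0(3) by auto
        next
          case False
          then have ua: "adj E u0 a0" using n1 adj_sym[of E a0 u0] by blast
          show ?thesis
          proof (cases "w0 = a0")
            case True then show ?thesis using ua by simp
          next
            case False
            then have "adj E a0 w0" using n2 by blast
            then show ?thesis using trans_cls[OF univ ua _ u0(3) u0v a0(2) w0v] by blast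
          qed
        qed
        then show False using u0(4) by blast
      qed
      then obtain w where w: "w \<in> V" "w \<noteq> v" "w \<noteq> a0" "\<not> adj E a0 w" by blast
      show ?thesis using del_edge_center[OF univ deg C vC a0 w] unfolding ea0 .
    qed
  qed
qed

end

context bgd
begin

lemma Vne: "V \<noteq> {}" using nonadj by blast

lemma crit_imp:
  assumes crit: "packing_critical V E"
  shows "2 \<le> min_degree V E"
proof (rule ccontr)
  assume md: "\<not> 2 \<le> min_degree V E"
  have "min_degree V E \<in> degree E ` V" unfolding min_degree_def
    by (rule Min_in) (use fV Vne in auto)
  then obtain x where x: "x \<in> V" "degree E x < 2" using md by auto
  define Nx where "Nx = {u. {u, x} \<in> E \<and> u \<noteq> x}"
  have Nx_iff: "u \<in> Nx \<longleftrightarrow> adj E x u" for u unfolding Nx_def adj_def by (auto simp: insert_commute)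
  have fN: "finite Nx" using finite_subset[OF _ fV, of Nx] inV Nx_iff by blast
  have cN: "card Nx \<le> 1" using x(2) unfolding degree_def Nx_def by simp
  obtain u0 w0 where u0: "u0 \<in> V" "w0 \<in> V" "u0 \<noteq> w0" "\<not> adj E u0 w0" using nonadj by blast
  obtain y where y: "y \<in> V" "y \<noteq> x" using u0 by blast
  have "\<exists>v. adj E x v" using near[OF x(1) y(1)] y(2) by blast
  then obtain v where xv: "adj E x v" by blast
  have only: "u = v" if "adj E x u" for u
    using cN xv that Nx_iff unfolding One_nat_def card_le_Suc0_iff_eq[OF fN] by blast
  have vV: "v \<in> V" using inV xv by blast
  have vx: "v \<noteq> x" using xv adj_irr by metis
  have univ: "adj E v y" if "y \<in> V" "y \<noteq> v" "y \<noteq> x" for y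
  proof -
    have "x = y \<or> adj E x y \<or> (\<exists>m. adj E x m \<and> adj E m y)" by (rule near[OF x(1) that(1)])
    then show ?thesis using that only by metis
  qed
  define V' where "V' = V - {x}"
  define E' where "E' = del_vertex_edges E x"
  have fV': "finite V'" unfolding V'_def using fV by simp
  have adjH: "adj E' a b \<longleftrightarrow> adj E a b \<and> a \<noteq> x \<and> b \<noteq> x" for a b unfolding E'_def by (rule adj_del)
  have "graph V' E'"
    unfolding graph_def
  proof (intro conjI ballI)
    show "finite V'" by (rule fV')
  next
    fix e assume "e \<in> E'"
    then have "e \<in> E" "x \<notin> e" unfolding E'_def del_vertex_edges_def by auto
    then obtain p q where "e = {p, q}" "p \<noteq> q" "p \<in> V" "q \<in> V" using g unfolding graph_def by blast
    then show "\<exists>u v. e = {u, v} \<and> u \<noteq> v \<and> u \<in> V' \<and> v \<in> V'" using \<open>x \<notin> e\<close> unfolding V'_def by blast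
  qed
  moreover have "V' \<subseteq> V" "E' \<subseteq> E" unfolding V'_def E'_def del_vertex_edges_def by auto
  moreover have "(V', E') \<noteq> (V, E)" using x(1) unfolding V'_def by auto
  ultimately have "proper_subgraph V' E' V E" unfolding proper_subgraph_def subgraph_def by blast
  then have lt: "packing_chromatic V' E' < packing_chromatic V E" using crit unfolding packing_critical_def by blast
  obtain c where c: "packing_coloring V' E' (packing_chromatic V' E') c" using chi_ex[OF fV'] by blast
  have distH: "\<forall>a\<in>V'. \<forall>b\<in>V'. gdist V' E' a b \<le> enat 2"
  proof (intro ballI)
    fix a b assume a: "a \<in> V'" and b: "b \<in> V'"
    have ax: "a \<noteq> x" "b \<noteq> x" "a \<in> V" "b \<in> V" using a b unfolding V'_def by auto
    have "a = b \<or> adj E a b \<or> (\<exists>m. adj E a m \<and> adj E m b)" by (rule near[OF ax(3,4)])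
    then have "a = b \<or> adj E' a b \<or> (\<exists>m. adj E' a m \<and> adj E' m b)"
    proof (elim disjE exE conjE)
      fix m assume m: "adj E a m" "adj E m b"
      show ?thesis
      proof (cases "m = x")
        case True
        have "adj E x a" using m(1) True adj_sym[of E a m] by simp
        moreover have "adj E x b" using m(2) True by simp
        ultimately have "a = v" "b = v" using only by blast+
        then show ?thesis by simp
      next
        case False
        then show ?thesis using m ax adjH by blast
      qed
    qed (use ax adjH in auto)
    then show "gdist V' E' a b \<le> enat 2" by (rule gdist_le2I)
  qed
  have V'ne: "V' \<noteq> {}" using vV vx unfolding V'_def by blast
  define C1 where "C1 = {u\<in>V'. c u = 1}"
  have LBH: "1 + card (V' - C1) \<le> packing_chromatic V' E'"
    unfolding C1_def by (rule LB[OF fV' V'ne c distH])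
  have indep: "\<not> adj E a b" if "a \<in> C1" "b \<in> C1" "a \<noteq> b" for a b
  proof
    assume ab: "adj E a b"
    have abx: "a \<noteq> x" "b \<noteq> x" "a \<in> V'" "b \<in> V'" using that unfolding C1_def V'_def by auto
    then have "adj E' a b" using ab adjH by blast
    then have "gdist V' E' a b \<le> enat 1" by (intro gdist_le1I) simp
    moreover have "c a = c b" using that unfolding C1_def by simp
    then have "enat (c a) < gdist V' E' a b" using c abx that unfolding packing_coloring_def by blast
    moreover have "c a = 1" using that unfolding C1_def by blast
    ultimately show False by simp
  qed
  show False
  proof (cases "v \<in> C1")
    case False
    define I where "I = insert x C1"
    have IV: "I \<subseteq> V" unfolding I_def C1_def V'_def using x by blast
    have indI: "\<forall>a\<in>I. \<forall>b\<in>I. a \<noteq> b \<longrightarrow> \<not> adj E a b"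
    proof -
      have "\<not> adj E x u" if "u \<in> C1" for u using only that False by blast
      then show ?thesis unfolding I_def using indep adj_sym[of E _ x] by blast
    qed
    obtain c' where "packing_coloring V E (1 + card (V - I)) c'" using UB1[OF fV IV indI] by blast
    then have "packing_chromatic V E \<le> 1 + card (V - I)" by (rule chi_le)
    moreover have "V - I = V' - C1" unfolding I_def V'_def by blast
    ultimately show False using LBH lt by simp
  next
    case True
    have C1v: "C1 = {v}"
    proof
      show "C1 \<subseteq> {v}"
      proof
        fix u assume u: "u \<in> C1"
        show "u \<in> {v}"
        proof (rule ccontr)
          assume "u \<notin> {v}"
          then have "u \<noteq> v" by simp
          moreover have "u \<in> V" "u \<noteq> x" using u unfolding C1_def V'_def by auto
          ultimately have "adj E v u" using univ by blast
          then show False using indep[OF True u] \<open>u \<noteq> v\<close> by metis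
        qed
      qed
    qed (use True in blast)
    have ind2: "\<forall>p\<in>{u0, w0}. \<forall>q\<in>{u0, w0}. p \<noteq> q \<longrightarrow> \<not> adj E p q"
      using u0(4) adj_sym[of E w0 u0] by auto
    obtain c' where "packing_coloring V E (1 + card (V - {u0, w0})) c'"
      using UB1[OF fV _ ind2] u0 by blast
    then have "packing_chromatic V E \<le> 1 + card (V - {u0, w0})" by (rule chi_le)
    moreover have "V' - C1 = V - {x, v}" unfolding C1v V'_def by blast
    moreover have "card (V - {x, v}) = card V - 2" by (rule card2[OF fV x(1) vV vx[symmetric]])
    moreover have "card (V - {u0, w0}) = card V - 2" by (rule card2[OF fV u0(1,2,3)])
    ultimately show False using LBH lt by simp
  qed
qed

lemma deg_imp:
  assumes md: "2 \<le> min_degree V E"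
  shows "packing_critical V E"
  unfolding packing_critical_def
proof (intro allI impI)
  fix V' E' assume ps: "proper_subgraph V' E' V E"
  obtain v where univ: "v \<in> V" "\<forall>y\<in>V. y \<noteq> v \<longrightarrow> adj E v y" using universal by blast
  have deg: "\<forall>y\<in>V. y \<noteq> v \<longrightarrow> (\<exists>y'. adj E y y' \<and> y' \<noteq> v)"
  proof (intro ballI impI)
    fix y assume y: "y \<in> V" "y \<noteq> v"
    show "\<exists>y'. adj E y y' \<and> y' \<noteq> v"
    proof (rule ccontr)
      assume ny: "\<not> ?thesis"
      define Ny where "Ny = {u. {u, y} \<in> E \<and> u \<noteq> y}"
      have "Ny \<subseteq> {v}"
      proof
        fix u assume "u \<in> Ny"
        then have "adj E y u" unfolding Ny_def adj_def by (auto simp: insert_commute)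
        then show "u \<in> {v}" using ny by blast
      qed
      then have "card Ny \<le> 1" using card_mono[of "{v}" Ny] by simp
      moreover have "min_degree V E \<le> degree E y" unfolding min_degree_def
        using fV y(1) by (intro Min_le) auto
      ultimately show False using md unfolding degree_def Ny_def by simp
    qed
  qed
  obtain c0 where c0: "packing_coloring V E (packing_chromatic V E) c0" using chi_ex[OF fV] by blast
  define C where "C = {u\<in>V. c0 u = 1}"
  have distG: "\<forall>a\<in>V. \<forall>b\<in>V. gdist V E a b \<le> enat 2" by (intro ballI dist2)
  have LBG: "1 + card (V - C) \<le> packing_chromatic V E"
    unfolding C_def by (rule LB[OF fV Vne c0 distG])
  have CV: "C \<subseteq> V" unfolding C_def by blast
  have indC: "\<forall>a\<in>C. \<forall>b\<in>C. a \<noteq> b \<longrightarrow> \<not> adj E a b"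
  proof (intro ballI impI notI)
    fix a b assume a: "a \<in> C" and b: "b \<in> C" and ab: "a \<noteq> b" and adj: "adj E a b"
    have "gdist V E a b \<le> enat 1" using adj by (intro gdist_le1I) simp
    moreover have "c0 a = c0 b" using a b unfolding C_def by simp
    then have "enat (c0 a) < gdist V E a b" using c0 a b ab CV unfolding packing_coloring_def by blast
    moreover have "c0 a = 1" using a unfolding C_def by blast
    ultimately show False by simp
  qed
  have cVC: "card (V - C) = card V - card C" using CV fV by (intro card_Diff_subset) (auto intro: finite_subset)
  have cCV: "card C \<le> card V" using CV fV by (intro card_mono) auto
  have "\<exists>V1 E1 k c. V' \<subseteq> V1 \<and> E' \<subseteq> E1 \<and> packing_coloring V1 E1 k c \<and> k + card C \<le> card V"
  proof (cases "V' = V")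
    case False
    then obtain x where x: "x \<in> V" "x \<notin> V'" using ps unfolding proper_subgraph_def subgraph_def by blast
    have "V' \<subseteq> V - {x}" using ps x unfolding proper_subgraph_def subgraph_def by blast
    moreover have "E' \<subseteq> del_vertex_edges E x"
    proof
      fix e assume e: "e \<in> E'"
      have "graph V' E'" "E' \<subseteq> E" using ps unfolding proper_subgraph_def subgraph_def by blast+
      then obtain p q where pq: "e = {p, q}" "p \<in> V'" "q \<in> V'" using e unfolding graph_def by blast
      have "e \<in> E" using e \<open>E' \<subseteq> E\<close> by blast
      moreover have "x \<notin> e" using pq x(2) by auto
      ultimately show "e \<in> del_vertex_edges E x" unfolding del_vertex_edges_def by blast
    qed
    moreover obtain k c where "packing_coloring (V - {x}) (del_vertex_edges E x) k c" "k + card C \<le> card V"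
      using del_vertex_case[OF univ deg CV indC x(1)] by blast
    ultimately show ?thesis by blast
  next
    case True
    then have "E' \<noteq> E" "E' \<subseteq> E" using ps unfolding proper_subgraph_def subgraph_def by auto
    then obtain e where e: "e \<in> E" "e \<notin> E'" by blast
    then have "E' \<subseteq> E - {e}" using \<open>E' \<subseteq> E\<close> by blast
    moreover obtain k c where "packing_coloring V (E - {e}) k c" "k + card C \<le> card V"
      using del_edge_case[OF univ deg CV indC e(1)] by blast
    ultimately show ?thesis using True by blast
  qed
  then obtain V1 E1 k c where h: "V' \<subseteq> V1" "E' \<subseteq> E1" "packing_coloring V1 E1 k c" "k + card C \<le> card V"
    by blast
  have "packing_coloring V' E' k c" by (rule coloring_mono[OF h(3) h(1) h(2)])
  then have "packing_chromatic V' E' \<le> k" by (rule chi_le)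
  then show "packing_chromatic V' E' < packing_chromatic V E" using h(4) LBG cVC cCV by linarith
qed

end

theorem theorem5p1:
  fixes V :: "'a set" and E :: "'a set set"
  assumes "block_graph V E" and "diameter V E = 2"
  shows "packing_critical V E \<longleftrightarrow> min_degree V E \<ge> 2"
proof -
  interpret bgd V E using assms by unfold_locales
  show ?thesis using crit_imp deg_imp by blast
qed

end
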